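(* Let $n\ge 2$ and let $G$ be a labeled threshold graph on the vertex set $\{1,\dots,n\}$. Then there exists a unique threshold pair $(\pi,w)$ of size $n$ in standard form such that $G=T(\pi,w)$ (equality as labeled graphs).
   Context: A threshold graph is a graph obtainable from the empty graph by repeatedly adding a new vertex that is either adjacent to all existing vertices or to none. A labeled threshold graph on $n$ vertices is a threshold graph with vertex set $\{1,\dots,n\}$; two labeled graphs are equal if they have the same edge set. Let $\mathcal{S}_n$ be the set of permutations of $\{1,\dots,n\}$, written in one-line notation $\pi=\pi_1\pi_2\cdots\pi_n$. A threshold pair of size $n$ is a pair $(\pi,w)$ with $\pi\in\mathcal{S}_n$ and $w=w_1\cdots w_n\in\{+1,-1\}^n$. The graph $T(\pi,w)$ is defined as follows: $G_1$ is the graph with the single vertex $\pi_1$; for $2\le i\le n$, $G_i$ is obtained from $G_{i-1}$ by adding a new vertex $\pi_i$ which is adjacent to every vertex of $G_{i-1}$ if $w_i=+1$ and is isolated if $w_i=-1$; then $T(\pi,w)=G_n$. A threshold pair $(\pi,w)$ of size $n\ge 2$ is in standard form if $w_1=w_2$ and, for all $1\le i<n$, $w_i=w_{i+1}$ implies $\pi_i<\pi_{i+1}$. *)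

theory Defs
  imports Main
begin

text \<open>Simple graphs are represented as pairs (V, E) of a vertex set and a set of
  edges, each edge being a two-element subset of V.\<close>

type_synonym graph = "nat set \<times> nat set set"

inductive threshold_graph :: "graph \<Rightarrow> bool" where
  empty: "threshold_graph ({}, {})"
| isolated: "threshold_graph (V, E) \<Longrightarrow> v \<notin> V \<Longrightarrow> threshold_graph (insert v V, E)"
| dominating: "threshold_graph (V, E) \<Longrightarrow> v \<notin> V \<Longrightarrow>
      threshold_graph (insert v V, E \<union> {{v, u} | u. u \<in> V})"

text \<open>A permutation of {1..n} in one-line notation is a list pi with
  pi ! (i-1) = pi_i; a sign word w is a list of booleans, True meaning +1 and
  False meaning -1. Indices are 0-based in the lists.\<close>

definition is_perm :: "nat \<Rightarrow> nat list \<Rightarrow> bool" where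
  "is_perm n pi \<longleftrightarrow> length pi = n \<and> distinct pi \<and> set pi = {1..n}"

definition threshold_pair :: "nat \<Rightarrow> nat list \<Rightarrow> bool list \<Rightarrow> bool" where
  "threshold_pair n pi w \<longleftrightarrow> is_perm n pi \<and> length w = n"

text \<open>The graph G_k built from the first k letters (G_1 = single vertex pi_1).
  Vertex pi_i (i \<ge> 2) is joined to all previous vertices iff w_i = +1; w_1 is
  irrelevant.\<close>

fun build :: "nat list \<Rightarrow> bool list \<Rightarrow> nat \<Rightarrow> graph" where
  "build pi w 0 = ({}, {})"
| "build pi w (Suc k) =
     (if k = 0 then ({pi ! 0}, {})
      else (let (V, E) = build pi w k in
            (insert (pi ! k) V,
             if w ! k then E \<union> {{pi ! k, u} | u. u \<in> V} else E)))"

definition T :: "nat list \<Rightarrow> bool list \<Rightarrow> graph" where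
  "T pi w = build pi w (length pi)"

definition standard_form :: "nat \<Rightarrow> nat list \<Rightarrow> bool list \<Rightarrow> bool" where
  "standard_form n pi w \<longleftrightarrow> w ! 0 = w ! 1 \<and>
     (\<forall>i. i + 1 < n \<longrightarrow> w ! i = w ! (i + 1) \<longrightarrow> pi ! i < pi ! (i + 1))"

end

theory Submission
  imports Defs
begin



definition edges :: "nat list \<Rightarrow> bool list \<Rightarrow> nat \<Rightarrow> nat set set" where
  "edges pi w k = {{pi!i, pi!j} | i j. j < i \<and> i < k \<and> w!i}"

lemma build_closed: "k \<le> length pi \<Longrightarrow> build pi w k = (set (take k pi), edges pi w k)"
proof (induction k)
  case 0 show ?case by (simp add: edges_def)
next
  case (Suc k)
  show ?case
  proof (cases "k = 0")
    case True
    then show ?thesis using Suc.prems by (cases pi) (auto simp: edges_def)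
  next
    case False
    have IH: "build pi w k = (set (take k pi), edges pi w k)" using Suc by simp
    have s: "set (take (Suc k) pi) = insert (pi!k) (set (take k pi))"
      using Suc.prems by (simp add: take_Suc_conv_app_nth)
    have t: "set (take k pi) = (\<lambda>j. pi!j) ` {..<k}"
      using Suc.prems nth_image[of k pi] by (simp add: atLeast0LessThan)
    have e: "edges pi w (Suc k) = (if w!k then edges pi w k \<union> {{pi!k, u} | u. u \<in> set (take k pi)} else edges pi w k)"
      unfolding t edges_def by (auto simp: less_Suc_eq)
    show ?thesis using False IH s e by simp
  qed
qed

lemma T_closed: "T pi w = (set pi, edges pi w (length pi))"
  unfolding T_def by (simp add: build_closed)

lemma adj:
  assumes "distinct pi" "i < length pi" "j < length pi" "i \<noteq> j" "k \<le> length pi"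
  shows "{pi!i, pi!j} \<in> edges pi w k \<longleftrightarrow> max i j < k \<and> w!(max i j)"
proof
  assume "{pi!i, pi!j} \<in> edges pi w k"
  then obtain a b where ab: "b < a" "a < k" "w!a" "{pi!i, pi!j} = {pi!a, pi!b}"
    unfolding edges_def by blast
  have "a < length pi" "b < length pi" using ab assms by auto
  then have "(i = a \<and> j = b) \<or> (i = b \<and> j = a)"
    using ab(4) assms by (auto simp: doubleton_eq_iff nth_eq_iff_index_eq)
  then show "max i j < k \<and> w!(max i j)" using ab by auto
next
  assume h: "max i j < k \<and> w!(max i j)"
  show "{pi!i, pi!j} \<in> edges pi w k"
  proof (cases "i < j")
    case True
    then have "{pi!i, pi!j} = {pi!j, pi!i} \<and> i < j \<and> j < k \<and> w!j" using h by (auto simp: max_def insert_commute)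
    then show ?thesis unfolding edges_def by blast
  next
    case False
    then have "j < i \<and> i < k \<and> w!i" using h assms(4) by (auto simp: max_def)
    then show ?thesis unfolding edges_def by blast
  qed
qed

lemma chain:
  assumes "standard_form m pi w" "\<forall>l. j \<le> l \<and> l < m \<longrightarrow> w!l = s"
  shows "j + Suc d < m \<Longrightarrow> pi!j < pi!(j + Suc d)"
proof (induction d)
  case 0
  have "w!j = w!(j+1)" using assms(2) 0 by simp
  then show ?case using assms(1) 0 unfolding standard_form_def by simp
next
  case (Suc d)
  then have "pi!j < pi!(j + Suc d)" by simp
  moreover have "w!(j + Suc d) = w!(j + Suc d + 1)" using assms(2) Suc.prems by simp
  then have "pi!(j + Suc d) < pi!(j + Suc d + 1)" using assms(1) Suc.prems unfolding standard_form_def by simp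
  ultimately show ?case by simp
qed

lemma edges_take: "edges (take k pi) (take k w) k = edges pi w k"
proof -
  have "{take k pi ! i, take k pi ! j} = {pi!i, pi!j} \<and> take k w ! i = w ! i" if "j < i" "i < k" for i j
    using that by simp
  then show ?thesis unfolding edges_def by (smt (verit) Collect_cong)
qed

lemma edges_mono: "k \<le> m \<Longrightarrow> edges pi w k \<subseteq> edges pi w m"
  unfolding edges_def by fastforce

lemma edges_prefix:
  assumes "length pi = Suc k" "distinct pi"
  shows "edges pi w k = {e \<in> edges pi w (Suc k). pi!k \<notin> e}"
proof
  show "edges pi w k \<subseteq> {e \<in> edges pi w (Suc k). pi!k \<notin> e}"
  proof
    fix e assume "e \<in> edges pi w k"
    then obtain i j where ij: "j < i" "i < k" "w!i" "e = {pi!i, pi!j}" unfolding edges_def by blast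
    have "pi!k \<noteq> pi!i" "pi!k \<noteq> pi!j" using ij assms by (auto simp: nth_eq_iff_index_eq)
    then show "e \<in> {e \<in> edges pi w (Suc k). pi!k \<notin> e}" using ij unfolding edges_def by auto
  qed
next
  show "{e \<in> edges pi w (Suc k). pi!k \<notin> e} \<subseteq> edges pi w k"
  proof
    fix e assume "e \<in> {e \<in> edges pi w (Suc k). pi!k \<notin> e}"
    then obtain i j where ij: "j < i" "i < Suc k" "w!i" "e = {pi!i, pi!j}" "pi!k \<notin> e" unfolding edges_def by blast
    then have "i \<noteq> k" by auto
    then show "e \<in> edges pi w k" using ij unfolding edges_def by auto
  qed
qed

lemma last_lt:
  assumes len: "length pi = Suc k" "length w = Suc k" and dist: "distinct pi"
    and sf: "standard_form (Suc k) pi w" and k1: "1 \<le> k" and y: "y \<in> set pi" "y \<noteq> pi!k"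
    and dom: "\<forall>z\<in>set pi. z \<noteq> y \<longrightarrow> ({y,z} \<in> edges pi w (Suc k) \<longleftrightarrow> w!k)"
  shows "y < pi!k"
proof -
  obtain j where j: "j < Suc k" "y = pi!j" using y len by (auto simp: in_set_conv_nth)
  have jk: "j < k" using j y by (cases "j = k") auto
  have later: "w!l = w!k" if "j < l" "l < Suc k" for l
  proof -
    have "pi!l \<noteq> y" using j that dist len by (auto simp: nth_eq_iff_index_eq)
    then have "{y, pi!l} \<in> edges pi w (Suc k) \<longleftrightarrow> w!k" using dom that len by auto
    moreover have "{y, pi!l} \<in> edges pi w (Suc k) \<longleftrightarrow> w!l"
      using adj[where pi=pi and i=j and j=l and k="Suc k" and w=w] j that dist len by (auto simp: max_def)
    ultimately show ?thesis by simp
  qed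
  have atj: "w!j = w!k"
  proof (cases "j = 0")
    case True
    then show ?thesis using sf later[of 1] k1 unfolding standard_form_def by auto
  next
    case False
    have "pi!0 \<noteq> y" using j False dist len by (auto simp: nth_eq_iff_index_eq)
    then have "{y, pi!0} \<in> edges pi w (Suc k) \<longleftrightarrow> w!k" using dom len by auto
    moreover have "{y, pi!0} \<in> edges pi w (Suc k) \<longleftrightarrow> w!j"
      using adj[where pi=pi and i=j and j=0 and k="Suc k" and w=w] j False dist len by (auto simp: max_def)
    ultimately show ?thesis by simp
  qed
  have all: "\<forall>l. j \<le> l \<and> l < Suc k \<longrightarrow> w!l = w!k"
    using later atj by (metis le_neq_implies_less)
  have "pi!j < pi!(j + Suc (k - Suc j))"
    using chain[OF sf all, of "k - Suc j"] jk by simp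
  then show ?thesis using j jk by simp
qed

lemma dom_last:
  assumes "length pi = Suc k" "distinct pi"
  shows "\<forall>y\<in>set pi. y \<noteq> pi!k \<longrightarrow> ({pi!k, y} \<in> edges pi w (Suc k) \<longleftrightarrow> w!k)"
proof
  fix y assume y: "y \<in> set pi"
  then obtain j where j: "j < Suc k" "y = pi!j" using assms by (auto simp: in_set_conv_nth)
  show "y \<noteq> pi!k \<longrightarrow> ({pi!k, y} \<in> edges pi w (Suc k) \<longleftrightarrow> w!k)"
  proof
    assume "y \<noteq> pi!k"
    then have "j \<noteq> k" using j by auto
    then show "{pi!k, y} \<in> edges pi w (Suc k) \<longleftrightarrow> w!k"
      using adj[where pi=pi and i=k and j=j and k="Suc k" and w=w] j assms by (auto simp: max_def)
  qed
qed

lemma dec_last: "length xs = Suc k \<Longrightarrow> xs = take k xs @ [xs!k]"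
  by (metis lessI take_Suc_conv_app_nth take_all order_refl)
lemma set_take_last: "length xs = Suc k \<Longrightarrow> distinct xs \<Longrightarrow> set (take k xs) = set xs - {xs!k}"
proof -
  assume a: "length xs = Suc k" "distinct xs"
  have d: "xs = take k xs @ [xs!k]" using a(1) by (rule dec_last)
  then have "distinct (take k xs @ [xs!k])" using a by metis
  then have "xs!k \<notin> set (take k xs)" by simp
  moreover have "set xs = insert (xs!k) (set (take k xs))" using d by (metis list.simps(15) Un_insert_right set_append sup_bot.right_neutral empty_set)
  ultimately show ?thesis by auto
qed
lemma eq_by_take: "length xs = Suc k \<Longrightarrow> length ys = Suc k \<Longrightarrow> take k xs = take k ys \<Longrightarrow> xs!k = ys!k \<Longrightarrow> xs = ys"
  by (metis dec_last)

lemma uniq: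
  "length pi = m \<Longrightarrow> length pi' = m \<Longrightarrow> length w = m \<Longrightarrow> length w' = m \<Longrightarrow>
   distinct pi \<Longrightarrow> distinct pi' \<Longrightarrow> set pi = set pi' \<Longrightarrow>
   standard_form m pi w \<Longrightarrow> standard_form m pi' w' \<Longrightarrow>
   edges pi w m = edges pi' w' m \<Longrightarrow> 2 \<le> m \<Longrightarrow> pi = pi' \<and> w = w'"
proof (induction m arbitrary: pi pi' w w')
  case 0
  then show ?case by simp
next
  case (Suc k)
  let ?E = "edges pi w (Suc k)"
  have k1: "1 \<le> k" using Suc.prems by simp
  have A: "\<forall>y\<in>set pi. y \<noteq> pi!k \<longrightarrow> ({pi!k, y} \<in> ?E \<longleftrightarrow> w!k)"
    using dom_last Suc.prems by blast
  have A': "\<forall>y\<in>set pi. y \<noteq> pi'!k \<longrightarrow> ({pi'!k, y} \<in> ?E \<longleftrightarrow> w'!k)"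
    using dom_last[of pi' k w'] Suc.prems by simp
  have xin: "pi!k \<in> set pi" "pi'!k \<in> set pi" using Suc.prems by (metis nth_mem lessI)+
  have ss: "w!k = w'!k"
  proof (cases "pi!k = pi'!k")
    case True
    have "pi!0 \<in> set pi" "pi!0 \<noteq> pi!k" using Suc.prems k1 by (auto simp: nth_eq_iff_index_eq)
    then show ?thesis using A A' True by metis
  next
    case False
    then show ?thesis using A A' xin by (metis insert_commute)
  qed
  have xx: "pi!k = pi'!k"
  proof (rule ccontr)
    assume ne: "pi!k \<noteq> pi'!k"
    have "pi'!k < pi!k"
      apply (rule last_lt[of pi k w])
      using Suc.prems k1 ne xin A' ss by (auto simp: insert_commute)
    moreover have "pi!k < pi'!k"
      apply (rule last_lt[of pi' k w'])
      using Suc.prems k1 ne xin A ss by (auto simp: insert_commute)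
    ultimately show False by simp
  qed
  have dec: "xs = take k xs @ [xs!k]" if "length xs = Suc k" for xs :: "'a list"
    using that by (metis lessI take_Suc_conv_app_nth take_all order_refl)
  have two: "xs = [xs!0, xs!1]" if "length xs = Suc (Suc 0)" for xs :: "'a list"
    using that by (cases xs; cases "tl xs") auto
  show ?case
  proof (cases "k = 1")
    case True
    have "pi!0 \<in> set pi'" using Suc.prems by auto
    moreover have "pi!0 \<noteq> pi!1" using True Suc.prems by (simp add: nth_eq_iff_index_eq)
    then have "pi!0 \<noteq> pi'!1" using xx True by simp
    moreover have "set pi' = {pi'!0, pi'!1}"
    proof -
      have e2: "pi' = [pi'!0, pi'!1]" using two[of pi'] Suc.prems True by simp
      show ?thesis by (subst e2) simp
    qed
    ultimately have p0: "pi!0 = pi'!0" by auto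
    have w0: "w!0 = w'!0" using ss True Suc.prems unfolding standard_form_def by simp
    show ?thesis
    proof
      show "pi = pi'" apply (rule nth_equalityI) using Suc.prems p0 xx True by (auto simp: less_Suc_eq)
      show "w = w'" apply (rule nth_equalityI) using Suc.prems w0 ss True by (auto simp: less_Suc_eq)
    qed
  next
    case False
    then have k2: "2 \<le> k" using k1 by simp
    have sp: "set (take k pi) = set pi - {pi!k}" using Suc.prems set_take_last by blast
    have sp': "set (take k pi') = set pi' - {pi'!k}" using Suc.prems set_take_last by blast
    have sf: "standard_form k (take k pi) (take k w)" "standard_form k (take k pi') (take k w')"
      using Suc.prems k2 unfolding standard_form_def by auto
    have ed: "edges (take k pi) (take k w) k = edges (take k pi') (take k w') k"
      unfolding edges_take using edges_prefix[of pi k w] edges_prefix[of pi' k w'] Suc.prems xx by simp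
    have "take k pi = take k pi' \<and> take k w = take k w'"
      apply (rule Suc.IH)
      using Suc.prems sp sp' xx sf ed k2 by auto
    then show ?thesis using eq_by_take[of pi k pi'] eq_by_take[of w k w'] Suc.prems xx ss by blast
  qed
qed


lemma build_append: "k \<le> length pi \<Longrightarrow> k \<le> length w \<Longrightarrow> build (pi@xs) (w@ys) k = build pi w k"
proof (induction k)
  case 0
  then show ?case by simp
next
  case (Suc k)
  have a: "(pi@xs)!k = pi!k" "(w@ys)!k = w!k" using Suc.prems by (auto simp: nth_append)
  have b: "(pi@xs)!0 = pi!0" using Suc.prems by (auto simp: nth_append)
  show ?case using Suc a b by (simp only: build.simps)
qed

lemma T_snoc:
  assumes "length w = length pi" "T pi w = (V, E)"
  shows "T (pi@[v]) (w@[b]) = (insert v V, if b then E \<union> {{v, u} | u. u \<in> V} else E)"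
proof (cases "pi = []")
  case True
  have "({}, {}) = (V, E)" using assms True by (simp add: T_def)
  then have "V = {}" "E = {}" by auto
  then show ?thesis using True by (simp add: T_def)
next
  case False
  have "build (pi@[v]) (w@[b]) (length pi) = (V, E)"
    using build_append[of "length pi" pi w "[v]" "[b]"] assms by (simp add: T_def)
  then show ?thesis using False assms unfolding T_def by (simp add: nth_append)
qed

lemma exist_any:
  "threshold_graph G \<Longrightarrow> \<exists>pi w. distinct pi \<and> set pi = fst G \<and> length w = length pi \<and> T pi w = G"
proof (induction G rule: threshold_graph.induct)
  case empty
  then show ?case by (intro exI[of _ "[]"]) (simp add: T_def)
next
  case (isolated V E v)
  then obtain pi w where h: "distinct pi" "set pi = V" "length w = length pi" "T pi w = (V, E)" by auto
  show ?case
    apply (intro exI[of _ "pi@[v]"] exI[of _ "w@[False]"])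
    using h isolated.hyps T_snoc[OF h(3) h(4), of v False] by simp
next
  case (dominating V E v)
  then obtain pi w where h: "distinct pi" "set pi = V" "length w = length pi" "T pi w = (V, E)" by auto
  show ?case
    apply (intro exI[of _ "pi@[v]"] exI[of _ "w@[True]"])
    using h dominating.hyps T_snoc[OF h(3) h(4), of v True] by simp
qed

lemma edges_upd0: "edges pi (w[0 := b]) k = edges pi w k"
proof -
  have "w[0 := b] ! i = w ! i" if "j < i" for i j :: nat using that by (cases "i < length w") auto
  then show ?thesis unfolding edges_def by (smt (verit) Collect_cong)
qed

definition sw :: "nat \<Rightarrow> nat \<Rightarrow> nat" where
  "sw i l = (if l = i then Suc i else if l = Suc i then i else l)"

lemma edges_swap_sub:
  assumes "Suc i < length pi" "w!i = w!(Suc i)"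
  shows "edges (pi[i := pi!Suc i, Suc i := pi!i]) w (length pi) \<subseteq> edges pi w (length pi)"
proof
  fix e assume "e \<in> edges (pi[i := pi!Suc i, Suc i := pi!i]) w (length pi)"
  then obtain a b where ab: "b < a" "a < length pi" "w!a"
    "e = {pi[i := pi!Suc i, Suc i := pi!i] ! a, pi[i := pi!Suc i, Suc i := pi!i] ! b}"
    unfolding edges_def by auto
  have nth: "pi[i := pi!Suc i, Suc i := pi!i] ! l = pi ! (sw i l)" if "l < length pi" for l
    using that assms by (auto simp: nth_list_update sw_def)
  have e: "e = {pi ! sw i a, pi ! sw i b}" using ab nth by simp
  have ws: "w ! sw i l = w ! l" for l using assms by (simp add: sw_def)
  have lt: "sw i l < length pi" if "l < length pi" for l using that assms by (simp add: sw_def)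
  have ne: "sw i a \<noteq> sw i b" using ab by (auto simp: sw_def)
  have mx: "max (sw i a) (sw i b) = a \<or> max (sw i a) (sw i b) = sw i a" using ab by (auto simp: sw_def)
  have wm: "w ! max (sw i a) (sw i b)" using mx ab ws by metis
  let ?a = "max (sw i a) (sw i b)" and ?b = "min (sw i a) (sw i b)"
  have "e = {pi!?a, pi!?b}" using e by (auto simp: max_def min_def)
  moreover have "?b < ?a" "?a < length pi" using ne lt ab by (auto simp: max_def min_def)
  ultimately show "e \<in> edges pi w (length pi)" unfolding edges_def using wm by blast
qed

lemma edges_swap:
  assumes "Suc i < length pi" "w!i = w!(Suc i)"
  shows "edges (pi[i := pi!Suc i, Suc i := pi!i]) w (length pi) = edges pi w (length pi)"
proof
  show "edges (pi[i := pi!Suc i, Suc i := pi!i]) w (length pi) \<subseteq> edges pi w (length pi)"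
    using edges_swap_sub assms by blast
  define p where "p = pi[i := pi!Suc i, Suc i := pi!i]"
  have lp: "length p = length pi" unfolding p_def by simp
  have pback: "p[i := p!Suc i, Suc i := p!i] = pi"
    unfolding p_def using assms by (intro nth_equalityI) (auto simp: nth_list_update)
  have "edges (p[i := p!Suc i, Suc i := p!i]) w (length p) \<subseteq> edges p w (length p)"
    using edges_swap_sub[of i p w] assms lp by simp
  then show "edges pi w (length pi) \<subseteq> edges p w (length pi)" using pback lp by simp
qed

lemma sum_split2: "finite A \<Longrightarrow> i \<in> A \<Longrightarrow> j \<in> A \<Longrightarrow> i \<noteq> j \<Longrightarrow> sum g A = g i + g j + sum g (A - {i, j})"
proof -
  assume a: "finite A" "i \<in> A" "j \<in> A" "i \<noteq> j"
  have 1: "sum g A = g i + sum g (A - {i})" using a by (rule_tac sum.remove) auto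
  have 2: "sum g (A - {i}) = g j + sum g (A - {i} - {j})" using a by (rule_tac sum.remove) auto
  have 3: "A - {i} - {j} = A - {i, j}" by auto
  show ?thesis using 1 2 3 by (simp add: add.assoc)
qed

lemma f_swap:
  assumes "Suc i < length pi" "pi!Suc i < pi!i"
  shows "(\<Sum>l<length pi. l * pi!l) < (\<Sum>l<length pi. l * (pi[i := pi!Suc i, Suc i := pi!i])!l)"
proof -
  let ?p = "pi[i := pi!Suc i, Suc i := pi!i]"
  have r: "(\<Sum>l\<in>{..<length pi} - {i, Suc i}. l * ?p!l) = (\<Sum>l\<in>{..<length pi} - {i, Suc i}. l * pi!l)"
    by (rule sum.cong) (auto simp: nth_list_update)
  have "(\<Sum>l<length pi. l * ?p!l) = i * ?p!i + Suc i * ?p!Suc i + (\<Sum>l\<in>{..<length pi} - {i, Suc i}. l * ?p!l)"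
    using assms by (intro sum_split2) auto
  moreover have "(\<Sum>l<length pi. l * pi!l) = i * pi!i + Suc i * pi!Suc i + (\<Sum>l\<in>{..<length pi} - {i, Suc i}. l * pi!l)"
    using assms by (intro sum_split2) auto
  moreover have "i * pi!i + Suc i * pi!Suc i < i * ?p!i + Suc i * ?p!Suc i"
    using assms by (simp add: nth_list_update algebra_simps)
  ultimately show ?thesis using r by simp
qed


lemma U:
  assumes "n \<ge> 2"
    "threshold_pair n pi w \<and> standard_form n pi w \<and> T pi w = ({1..n}, E)"
    "threshold_pair n pi' w' \<and> standard_form n pi' w' \<and> T pi' w' = ({1..n}, E)"
  shows "pi = pi' \<and> w = w'"
proof -
  have a: "length pi = n" "length pi' = n" "length w = n" "length w' = n" "distinct pi" "distinct pi'"
    "set pi = {1..n}" "set pi' = {1..n}"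
    using assms unfolding threshold_pair_def is_perm_def by auto
  have "edges pi w n = E" "edges pi' w' n = E" using assms(2,3) a T_closed by (metis prod.inject)+
  then show ?thesis using uniq[of pi n pi' w w'] a assms by auto
qed

lemma Ex:
  assumes n2: "n \<ge> 2" and tg: "threshold_graph ({1..n}, E)"
  shows "\<exists>pi w. threshold_pair n pi w \<and> standard_form n pi w \<and> T pi w = ({1..n}, E)"
proof -
  obtain pi0 w0 where h: "distinct pi0" "set pi0 = {1..n}" "length w0 = length pi0" "T pi0 w0 = ({1..n}, E)"
    using exist_any[OF tg] by auto
  have l0: "length pi0 = n" using h distinct_card by fastforce
  have e0: "edges pi0 w0 n = E" using h(4) l0 T_closed by (metis prod.inject)
  define w1 where "w1 = w0[0 := w0!1]"
  have e1: "edges pi0 w1 n = E" unfolding w1_def edges_upd0 by (rule e0)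
  have w1: "w1!0 = w1!1" "length w1 = n" unfolding w1_def using n2 h(3) l0 by auto
  define cand where "cand pi w \<longleftrightarrow> distinct pi \<and> set pi = {1..n} \<and> length pi = n \<and> length w = n \<and> w!0 = w!1 \<and> edges pi w n = E" for pi w
  define f where "f pi = (\<Sum>l<n. l * pi!l)" for pi :: "nat list"
  define P where "P y \<longleftrightarrow> (\<exists>pi w. cand pi w \<and> f pi = y)" for y
  have P0: "P (f pi0)" unfolding P_def cand_def using h l0 w1 e1 by blast
  have bnd: "\<forall>y. P y \<longrightarrow> y \<le> n * (n * n)"
  proof (intro allI impI)
    fix y assume "P y"
    then obtain pi w where c: "cand pi w" "f pi = y" unfolding P_def by blast
    have "l * pi!l \<le> n * n" if "l \<in> {..<n}" for l
    proof -
      have "pi!l \<in> {1..n}" using c that unfolding cand_def by (metis lessThan_iff nth_mem)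
      then show ?thesis using that by (intro mult_le_mono) auto
    qed
    then have "f pi \<le> of_nat (card {..<n}) * (n * n)" unfolding f_def by (rule sum_bounded_above)
    then show "y \<le> n * (n * n)" using c by simp
  qed
  obtain y where y: "P y" "\<forall>z. P z \<longrightarrow> z \<le> y" using Nat.ex_has_greatest_nat[OF P0 bnd] by blast
  then obtain pi w where c: "cand pi w" "f pi = y" unfolding P_def by blast
  have sf: "standard_form n pi w"
    unfolding standard_form_def
  proof (intro conjI allI impI)
    show "w!0 = w!1" using c unfolding cand_def by simp
  next
    fix i assume i: "i + 1 < n" and ww: "w!i = w!(i+1)"
    show "pi!i < pi!(i+1)"
    proof (rule ccontr)
      assume "\<not> pi!i < pi!(i+1)"
      moreover have "pi!i \<noteq> pi!(i+1)" using c i unfolding cand_def by (simp add: nth_eq_iff_index_eq)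
      ultimately have lt: "pi!Suc i < pi!i" by simp
      define p where "p = pi[i := pi!Suc i, Suc i := pi!i]"
      have li: "Suc i < length pi" using c i unfolding cand_def by simp
      have "cand p w" using c li ww edges_swap[OF li, of w] unfolding cand_def p_def by auto
      moreover have "f pi < f p" using f_swap[OF li lt] c unfolding f_def p_def cand_def by simp
      ultimately show False using y c unfolding P_def by (metis leD)
    qed
  qed
  show ?thesis
    apply (intro exI[of _ pi] exI[of _ w])
    using c sf T_closed[of pi w] unfolding cand_def threshold_pair_def is_perm_def by auto
qed

theorem lemma2:
  fixes n :: nat and E :: "nat set set"
  assumes "n \<ge> 2"
    and "threshold_graph ({1..n}, E)"
  shows "\<exists>!(pi, w). threshold_pair n pi w \<and> standard_form n pi w \<and> T pi w = ({1..n}, E)"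
  apply (rule ex_ex1I)
  subgoal using Ex[OF assms] by auto
  subgoal for x y using U[OF assms(1)] by (cases x; cases y) auto
  done

end
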